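(* Let $n\in\mathbb{N}$ and let $f\colon[0,1]^n\to[0,1]$ be an aggregation function. Let $[0,1]^n_*$ be the set of $\mathbf{a}\in[0,1]^n$ with $\mathbf{a}\neq(0,\dots,0)$ and $\mathbf{a}\neq(1,\dots,1)$, and for $\mathbf{a}=(a_0,\dots,a_{n-1})\in[0,1]^n_*$ put $J_{\mathbf{a}}=\{i:a_i\neq0\}$ and $h^f_{\mathbf{a}}(\mathbf{x})=G^n_{f(\mathbf{a})}(\mathbf{x})\wedge\bigwedge_{i\in J_{\mathbf{a}}}\chi_{a_i}(x_i)$. Then $f(\mathbf{x})=\bigvee_{\mathbf{a}\in[0,1]^n_*}h^f_{\mathbf{a}}(\mathbf{x})$ for all $\mathbf{x}\in[0,1]^n$.
   Context: An $n$-ary aggregation function on $[0,1]$ is a function $f\colon[0,1]^n\to[0,1]$ nondecreasing in each coordinate with $f(0,\dots,0)=0$ and $f(1,\dots,1)=1$. For $a\in[0,1]$, $\chi_a(x)=1$ if $x\ge a$ and $x\neq0$, and $\chi_a(x)=0$ otherwise. $\mathsf{Med}_b(x,y)$ is the median of $x,y,b$. For $b\in[0,1]$, $G^n_b\colon[0,1]^n\to[0,1]$ is defined inductively by $G^1_b(x_0)=\mathsf{Med}_b(\chi_0(x_0),\chi_1(x_0))$, $G^2_b(x_0,x_1)=\mathsf{Med}_b(\chi_0(x_0\vee x_1),\chi_1(x_0\wedge x_1))$, $G^{n+1}_b(x_0,\dots,x_n)=G^2_b(G^n_b(x_0,\dots,x_{n-1}),x_n)$ for $n\ge2$. *)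

theory Defs
  imports Complex_Main
begin

text \<open>Points of [0,1]^n are represented as real lists of length n,
  x = [x_0, ..., x_(n-1)].\<close>

definition unit_cube :: "nat \<Rightarrow> real list set" where
  "unit_cube n = {x. length x = n \<and> (\<forall>i<n. 0 \<le> x ! i \<and> x ! i \<le> 1)}"

definition aggregation_function :: "nat \<Rightarrow> (real list \<Rightarrow> real) \<Rightarrow> bool" where
  "aggregation_function n f \<longleftrightarrow>
     (\<forall>x\<in>unit_cube n. 0 \<le> f x \<and> f x \<le> 1) \<and>
     (\<forall>x\<in>unit_cube n. \<forall>y\<in>unit_cube n. (\<forall>i<n. x ! i \<le> y ! i) \<longrightarrow> f x \<le> f y) \<and>
     f (replicate n 0) = 0 \<and> f (replicate n 1) = 1"

definition chi :: "real \<Rightarrow> real \<Rightarrow> real" where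
  "chi a x = (if a \<le> x \<and> x \<noteq> 0 then 1 else 0)"

definition Med :: "real \<Rightarrow> real \<Rightarrow> real \<Rightarrow> real" where
  "Med b x y = max (min x y) (min (max x y) b)"

definition G2 :: "real \<Rightarrow> real \<Rightarrow> real \<Rightarrow> real" where
  "G2 b x0 x1 = Med b (chi 0 (max x0 x1)) (chi 1 (min x0 x1))"

text \<open>G b [x0,...,x_(n-1)] is G^n_b(x0,...,x_(n-1)) for n \<ge> 1; the value on [] is irrelevant.\<close>
fun G :: "real \<Rightarrow> real list \<Rightarrow> real" where
  "G b [] = 0"
| "G b [x0] = Med b (chi 0 x0) (chi 1 x0)"
| "G b (x0 # x1 # rest) = foldl (G2 b) (G2 b x0 x1) rest"

definition cube_star :: "nat \<Rightarrow> real list set" where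
  "cube_star n = {a \<in> unit_cube n. a \<noteq> replicate n 0 \<and> a \<noteq> replicate n 1}"

definition J :: "real list \<Rightarrow> nat set" where
  "J a = {i. i < length a \<and> a ! i \<noteq> 0}"

definition h :: "(real list \<Rightarrow> real) \<Rightarrow> real list \<Rightarrow> real list \<Rightarrow> real" where
  "h f a x = Min (insert (G (f a) x) ((\<lambda>i. chi (a ! i) (x ! i)) ` J a))"

end

theory Submission
  imports Defs
begin

definition V :: "real \<Rightarrow> real list \<Rightarrow> real" where
  "V b p = (if \<forall>y\<in>set p. y = 0 then 0 else if \<forall>y\<in>set p. y = 1 then 1 else b)"

lemma G2_step:
  assumes "p \<noteq> []" "\<forall>y\<in>set p. 0 \<le> y \<and> y \<le> 1" "0 \<le> v" "v \<le> 1" "0 \<le> b" "b \<le> 1"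
  shows "G2 b (V b p) v = V b (p @ [v])"
proof -
  have A: "\<not> ((\<forall>y\<in>set p. y = 0) \<and> (\<forall>y\<in>set p. y = 1))"
    using assms(1) by (cases p) auto
  show ?thesis using assms A
    unfolding V_def G2_def Med_def chi_def by (auto simp: max_def min_def)
qed

lemma foldl_V:
  assumes "p \<noteq> []" "\<forall>y\<in>set p. 0 \<le> y \<and> y \<le> 1" "\<forall>y\<in>set r. 0 \<le> y \<and> y \<le> 1"
    "0 \<le> b" "b \<le> 1"
  shows "foldl (G2 b) (V b p) r = V b (p @ r)"
  using assms
proof (induction r arbitrary: p)
  case Nil
  then show ?case by simp
next
  case (Cons v r)
  have "G2 b (V b p) v = V b (p @ [v])"
    using Cons.prems by (intro G2_step) auto
  moreover have "foldl (G2 b) (V b (p @ [v])) r = V b ((p @ [v]) @ r)"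
    using Cons.prems by (intro Cons.IH) auto
  ultimately show ?case by simp
qed

lemma G_V:
  assumes "x \<noteq> []" "\<forall>y\<in>set x. 0 \<le> y \<and> y \<le> 1" "0 \<le> b" "b \<le> 1"
  shows "G b x = V b x"
proof (cases "(b, x)" rule: G.cases)
  case (1 b' )
  then show ?thesis using assms by simp
next
  case (2 b' x0)
  then show ?thesis using assms by (auto simp: V_def Med_def chi_def)
next
  case (3 b' x0 x1 rest)
  have "G2 b x0 x1 = V b [x0, x1]"
    using assms 3 unfolding V_def G2_def Med_def chi_def by (auto simp: max_def min_def)
  then have "G b x = foldl (G2 b) (V b [x0, x1]) rest" using 3 by simp
  also have "\<dots> = V b ([x0, x1] @ rest)"
    using assms 3 by (intro foldl_V) auto
  finally show ?thesis using 3 by simp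
qed

theorem lemma3:
  fixes n :: nat and f :: "real list \<Rightarrow> real"
  assumes "aggregation_function n f"
  shows "\<forall>x\<in>unit_cube n. f x = (SUP a\<in>cube_star n. h f a x)"
proof
  fix x assume xc: "x \<in> unit_cube n"
  have range: "\<And>z. z \<in> unit_cube n \<Longrightarrow> 0 \<le> f z \<and> f z \<le> 1"
    and mono: "\<And>z y. z \<in> unit_cube n \<Longrightarrow> y \<in> unit_cube n \<Longrightarrow> (\<forall>i<n. z ! i \<le> y ! i) \<Longrightarrow> f z \<le> f y"
    and f0: "f (replicate n 0) = 0" and f1: "f (replicate n 1) = 1"
    using assms unfolding aggregation_function_def by auto
  have n0: "n \<noteq> 0" using f0 f1 by (cases n) auto
  have xl: "length x = n" and xr: "\<forall>i<n. 0 \<le> x ! i \<and> x ! i \<le> 1"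
    using xc unfolding unit_cube_def by auto
  have xne: "x \<noteq> []" using xl n0 by auto
  have xset: "\<forall>y\<in>set x. 0 \<le> y \<and> y \<le> 1" using xl xr by (auto simp: in_set_conv_nth)
  have fin: "\<And>a. finite (J a)" unfolding J_def by auto
  have chi01: "\<And>a y. chi a y = 0 \<or> chi a y = 1" unfolding chi_def by auto
  have Gval: "\<And>a. a \<in> cube_star n \<Longrightarrow> G (f a) x = V (f a) x"
    using range xne xset by (intro G_V) (auto simp: cube_star_def)
  define c where "c = replicate n (1/2::real)"
  have cstar: "c \<in> cube_star n" using n0 unfolding c_def cube_star_def unit_cube_def
    by (auto simp: list_eq_iff_nth_eq)
  then have nonempty: "cube_star n \<noteq> {}" by auto
  show "f x = (SUP a\<in>cube_star n. h f a x)"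
  proof (cases "\<forall>y\<in>set x. y = 0")
    case True
    then have xz: "x = replicate n 0" using xl by (simp add: list_eq_iff_nth_eq)
    have "\<And>a. a \<in> cube_star n \<Longrightarrow> h f a x = 0"
    proof -
      fix a assume "a \<in> cube_star n"
      then have g: "G (f a) x = 0" using Gval True unfolding V_def by simp
      show "h f a x = 0" unfolding h_def g
        by (rule Min_eqI) (use fin chi01 in \<open>auto simp: chi_def\<close>)
    qed
    then have "(SUP a\<in>cube_star n. h f a x) = (SUP a\<in>cube_star n. 0)"
      by (intro SUP_cong) auto
    then show ?thesis using nonempty xz f0 by simp
  next
    case nz: False
    show ?thesis
    proof (cases "\<forall>y\<in>set x. y = 1")
      case True
      then have xo: "x = replicate n 1" using xl by (simp add: list_eq_iff_nth_eq)
      have "\<And>a. a \<in> cube_star n \<Longrightarrow> h f a x = 1"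
      proof -
        fix a assume as: "a \<in> cube_star n"
        then have g: "G (f a) x = 1" using Gval True nz unfolding V_def by simp
        have "\<And>i. i \<in> J a \<Longrightarrow> chi (a ! i) (x ! i) = 1"
          using as xo unfolding J_def cube_star_def unit_cube_def chi_def by auto
        then show "h f a x = 1" unfolding h_def g
          by (intro Min_eqI) (use fin in auto)
      qed
      then have "(SUP a\<in>cube_star n. h f a x) = (SUP a\<in>cube_star n. 1)"
        by (intro SUP_cong) auto
      then show ?thesis using nonempty xo f1 by simp
    next
      case no: False
      have xs: "x \<in> cube_star n" using xc nz no unfolding cube_star_def by auto
      have gv: "\<And>a. a \<in> cube_star n \<Longrightarrow> G (f a) x = f a"
        using Gval nz no unfolding V_def by simp
      have hx: "h f x x = f x"
      proof -
        have "\<And>i. i \<in> J x \<Longrightarrow> chi (x ! i) (x ! i) = 1"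
          unfolding J_def chi_def by auto
        then show ?thesis unfolding h_def gv[OF xs]
          using range[OF xc] by (intro Min_eqI) (use fin in auto)
      qed
      have le: "\<And>a. a \<in> cube_star n \<Longrightarrow> h f a x \<le> f x"
      proof -
        fix a assume as: "a \<in> cube_star n"
        then have ac: "a \<in> unit_cube n" and al: "length a = n"
          and ar: "\<forall>i<n. 0 \<le> a ! i \<and> a ! i \<le> 1"
          unfolding cube_star_def unit_cube_def by auto
        show "h f a x \<le> f x"
        proof (cases "\<forall>i\<in>J a. a ! i \<le> x ! i")
          case True
          have "\<forall>i<n. a ! i \<le> x ! i"
          proof (intro allI impI)
            fix i assume "i < n"
            then show "a ! i \<le> x ! i" using True xr al unfolding J_def
              by (cases "a ! i = 0") auto
          qed
          then have "f a \<le> f x" using mono[OF ac xc] by simp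
          moreover have "h f a x \<le> G (f a) x" unfolding h_def
            by (rule Min_le) (use fin in auto)
          ultimately show ?thesis using gv[OF as] by simp
        next
          case False
          then obtain i where i: "i \<in> J a" "\<not> a ! i \<le> x ! i" by auto
          then have "chi (a ! i) (x ! i) = 0" unfolding chi_def by auto
          moreover have "h f a x \<le> chi (a ! i) (x ! i)" unfolding h_def
            using i(1) by (intro Min_le) (use fin in auto)
          ultimately have "h f a x \<le> 0" by simp
          then show ?thesis using range[OF xc] by simp
        qed
      qed
      show ?thesis
        using xs le hx by (intro cSup_eq_maximum[symmetric]) (auto intro: image_eqI[where x=x])
    qed
  qed
qed

end
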